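(* Let $\mathcal H$ be a Hilbert space of finite dimension $N$, and let $\lambda\mapsto \hat H(\lambda)$ ($\lambda\in\mathbb R$) be a family of Hermitian operators on $\mathcal H$. Let $\lambda:[0,\tau]\to\mathbb R$, $t\mapsto\lambda_t$, be a protocol (regular enough for the equation below to have a solution), and let $U_t$ be the unitary evolution defined by $$ i\hbar\,\frac{\partial}{\partial t}U_t=\hat H(\lambda_t)\,U_t,\qquad U_0=\mathbb 1 .$$ For each $\lambda$, let $\{|\psi_k^\lambda\rangle\}_{k=1}^N$ be an orthonormal eigenbasis of $\hat H(\lambda)$, $\hat H(\lambda)|\psi_k^\lambda\rangle=\varepsilon_k(\lambda)|\psi_k^\lambda\rangle$, labelled so that $\varepsilon_k(\lambda_t)\ge\varepsilon_m(\lambda_t)$ whenever $k>m$, for all $t\in[0,\tau]$ (degeneracies are allowed). For $k\in\{1,\dots,N\}$ let $$A_k(\lambda)=\{q\in\{1,\dots,N\}:\ \varepsilon_q(\lambda)=\varepsilon_k(\lambda)\},\qquad g_k(\lambda)=\operatorname{card}A_k(\lambda),$$ $$\mathcal N_k(\lambda)=\Big[\prod_{q\in A_k(\lambda)} q\Big]^{1/g_k(\lambda)},\qquad \hat S(\lambda)=\sum_{k=1}^N \ln\mathcal N_k(\lambda)\,|\psi_k^\lambda\rangle\langle\psi_k^\lambda| .$$ Suppose there is a probability distribution $\{p_k\}_{k=1}^N$ such that $p_k=p_m$ for all $k,m$ with $m\in A_k(\lambda_0)$, $p_k\le p_m$ whenever $k>m$, and the initial state is $$\rho(0)=\sum_{k=1}^N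 p_k\,|\psi_k^{\lambda_0}\rangle\langle\psi_k^{\lambda_0}| .$$ Let $\rho(t)=U_t\rho(0)U_t^\dagger$ and $S(t)=\operatorname{Tr}\big[\rho(t)\,\hat S(\lambda_t)\big]$. Then $$S(\tau)\ge S(0).$$
   Context: $\hat S(\lambda)$ is called the (quantum) volume entropy operator; $\mathcal N_k(\lambda)$ is the geometric mean of the labels in the degenerate set $A_k(\lambda)$, so that $\ln\mathcal N_k(\lambda)$ is the arithmetic mean of $\ln q$ over $q\in A_k(\lambda)$. In the non-degenerate case $\mathcal N_k(\lambda)=k$. *)

theory Defs
  imports Complex_Main "Jordan_Normal_Form.Schur_Decomposition"
begin

(* Hilbert space = C^N, vectors/matrices from Jordan_Normal_Form; labels k range over {1..N}. *)

definition hermitian_mat :: "nat \<Rightarrow> complex mat \<Rightarrow> bool" where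
  "hermitian_mat N A \<longleftrightarrow> A \<in> carrier_mat N N \<and> mat_adjoint A = A"

(* sum_k c k |v_k><v_k| for k = 1..N *)
definition spectral_sum :: "nat \<Rightarrow> (nat \<Rightarrow> complex) \<Rightarrow> (nat \<Rightarrow> complex vec) \<Rightarrow> complex mat" where
  "spectral_sum N c v = mat N N (\<lambda>(i,j). \<Sum>k=1..N. c k * (v k $ i) * cnj (v k $ j))"

definition mat_has_derivative_within ::
  "nat \<Rightarrow> (real \<Rightarrow> complex mat) \<Rightarrow> complex mat \<Rightarrow> real \<Rightarrow> real set \<Rightarrow> bool" where
  "mat_has_derivative_within N U D t T \<longleftrightarrow>
     D \<in> carrier_mat N N \<and>
     (\<forall>i<N. \<forall>j<N. ((\<lambda>s. U s $$ (i,j)) has_vector_derivative (D $$ (i,j))) (at t within T))"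

definition degset :: "nat \<Rightarrow> (real \<Rightarrow> nat \<Rightarrow> real) \<Rightarrow> real \<Rightarrow> nat \<Rightarrow> nat set" where
  "degset N eps l k = {q \<in> {1..N}. eps l q = eps l k}"

definition degeneracy :: "nat \<Rightarrow> (real \<Rightarrow> nat \<Rightarrow> real) \<Rightarrow> real \<Rightarrow> nat \<Rightarrow> nat" where
  "degeneracy N eps l k = card (degset N eps l k)"

definition geomlabel :: "nat \<Rightarrow> (real \<Rightarrow> nat \<Rightarrow> real) \<Rightarrow> real \<Rightarrow> nat \<Rightarrow> real" where
  "geomlabel N eps l k =
     (\<Prod>q\<in>degset N eps l k. real q) powr (1 / real (degeneracy N eps l k))"

definition mat_trace :: "complex mat \<Rightarrow> complex" where
  "mat_trace A = (\<Sum>i<dim_row A. A $$ (i,i))"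

definition entropy_op :: "nat \<Rightarrow> (real \<Rightarrow> nat \<Rightarrow> real) \<Rightarrow> (real \<Rightarrow> nat \<Rightarrow> complex vec) \<Rightarrow> real \<Rightarrow> complex mat" where
  "entropy_op N eps psi l = spectral_sum N (\<lambda>k. complex_of_real (ln (geomlabel N eps l k))) (psi l)"

end

theory Submission
  imports Defs
begin


lemma cinner_sum:
  fixes v w :: "complex vec"
  assumes "v \<in> carrier_vec n" "w \<in> carrier_vec n"
  shows "v \<bullet>c w = (\<Sum>i<n. v $ i * cnj (w $ i))"
  using assms unfolding scalar_prod_def by (auto intro!: sum.cong)

lemma mult_vec_index:
  fixes X :: "complex mat"
  assumes "X \<in> carrier_mat n n" "v \<in> carrier_vec n" "i < n"
  shows "(X *\<^sub>v v) $ i = (\<Sum>l<n. X $$ (i,l) * v $ l)"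
  using assms by (auto simp: scalar_prod_def intro!: sum.cong)

lemma mult_mat_index:
  fixes X Y :: "complex mat"
  assumes "X \<in> carrier_mat n n" "Y \<in> carrier_mat n n" "i < n" "j < n"
  shows "(X * Y) $$ (i,j) = (\<Sum>l<n. X $$ (i,l) * Y $$ (l,j))"
  using assms by (auto simp: scalar_prod_def intro!: sum.cong)

lemma adjoint_index:
  fixes A :: "complex mat"
  assumes "A \<in> carrier_mat n m"
  shows "mat_adjoint A = mat m n (\<lambda>(i,j). cnj (A $$ (j,i)))"
  using assms unfolding mat_adjoint_def
  by (auto intro!: eq_matI simp: mat_of_rows_index)

lemma adjoint_carrier:
  fixes A :: "complex mat"
  assumes "A \<in> carrier_mat n m"
  shows "mat_adjoint A \<in> carrier_mat m n"
  using adjoint_index[OF assms] by simp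

lemma herm_entry:
  assumes "hermitian_mat N A" "l < N" "r < N"
  shows "cnj (A $$ (l,r)) = A $$ (r,l)"
proof -
  have A: "A \<in> carrier_mat N N" "mat_adjoint A = A" using assms(1) unfolding hermitian_mat_def by auto
  have "A $$ (r,l) = mat_adjoint A $$ (r,l)" using A by simp
  also have "\<dots> = cnj (A $$ (l,r))" using adjoint_index[OF A(1)] assms by simp
  finally show ?thesis by simp
qed


lemma real_const_Icc:
  fixes f :: "real \<Rightarrow> real"
  assumes "0 \<le> tau" "\<And>t. t \<in> {0..tau} \<Longrightarrow> (f has_field_derivative 0) (at t within {0..tau})"
  shows "f tau = f 0"
proof (cases "0 < tau")
  case True
  have "continuous_on {0..tau} f"
    using assms(2) DERIV_continuous continuous_on_eq_continuous_within by blast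
  moreover have "\<And>x. 0 < x \<Longrightarrow> x < tau \<Longrightarrow> DERIV f x :> 0"
    using assms(2) at_within_Icc_at by (metis atLeastAtMost_iff less_eq_real_def)
  ultimately show ?thesis using DERIV_isconst_end[OF True] by blast
next
  case False then show ?thesis using assms(1) by simp
qed

lemma complex_const_Icc:
  fixes f :: "real \<Rightarrow> complex"
  assumes "0 \<le> tau" "\<And>t. t \<in> {0..tau} \<Longrightarrow> (f has_vector_derivative 0) (at t within {0..tau})"
  shows "f tau = f 0"
proof -
  have "Re (f tau) = Re (f 0)"
    by (rule real_const_Icc[OF assms(1)]) (use has_field_derivative_Re[OF assms(2)] in auto)
  moreover have "Im (f tau) = Im (f 0)"
    by (rule real_const_Icc[OF assms(1)]) (use has_field_derivative_Im[OF assms(2)] in auto)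
  ultimately show ?thesis by (simp add: complex_eq_iff)
qed


lemma unitary_from_ode:
  fixes N :: nat and hbar tau :: real
    and H :: "real \<Rightarrow> complex mat" and lam :: "real \<Rightarrow> real"
    and U U' :: "real \<Rightarrow> complex mat"
  assumes hbar_pos: "hbar > 0"
    and tau_nonneg: "0 \<le> tau"
    and herm: "\<And>l. hermitian_mat N (H l)"
    and U_carrier: "\<And>t. t \<in> {0..tau} \<Longrightarrow> U t \<in> carrier_mat N N"
    and U_deriv: "\<And>t. t \<in> {0..tau} \<Longrightarrow> mat_has_derivative_within N U (U' t) t {0..tau}"
    and schroedinger: "\<And>t. t \<in> {0..tau} \<Longrightarrow> (\<i> * complex_of_real hbar) \<cdot>\<^sub>m U' t = H (lam t) * U t"
    and U_init: "U 0 = 1\<^sub>m N"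
    and ij: "i < N" "j < N"
  shows "(\<Sum>l<N. cnj (U tau $$ (l,i)) * U tau $$ (l,j)) = (if i = j then 1 else 0)"
proof -
  define c where "c = 1 / (\<i> * complex_of_real hbar)"
  have cc: "cnj c = - c" unfolding c_def by (simp add: divide_simps)
  have Hc: "H l \<in> carrier_mat N N" for l using herm unfolding hermitian_mat_def by auto
  have U'e: "U' t $$ (l,k) = c * (\<Sum>r<N. H (lam t) $$ (l,r) * U t $$ (r,k))"
    if t: "t \<in> {0..tau}" and lk: "l < N" "k < N" for t l k
  proof -
    have U'c: "U' t \<in> carrier_mat N N" using U_deriv[OF t] unfolding mat_has_derivative_within_def by auto
    have "((\<i> * complex_of_real hbar) \<cdot>\<^sub>m U' t) $$ (l,k) = (H (lam t) * U t) $$ (l,k)"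
      using schroedinger[OF t] by simp
    hence "(\<i> * complex_of_real hbar) * U' t $$ (l,k) = (\<Sum>r<N. H (lam t) $$ (l,r) * U t $$ (r,k))"
      using U'c lk mult_mat_index[OF Hc U_carrier[OF t] lk] by simp
    thus ?thesis unfolding c_def using hbar_pos by (simp add: field_simps)
  qed
  define f where "f t = (\<Sum>l<N. cnj (U t $$ (l,i)) * U t $$ (l,j))" for t
  have "f tau = f 0"
  proof (rule complex_const_Icc[OF tau_nonneg])
    fix t assume t: "t \<in> {0..tau}"
    have der: "((\<lambda>s. U s $$ (a,b)) has_vector_derivative (U' t $$ (a,b))) (at t within {0..tau})"
      if "a < N" "b < N" for a b
      using U_deriv[OF t] that unfolding mat_has_derivative_within_def by auto
    have "(f has_vector_derivative
       (\<Sum>l<N. cnj (U t $$ (l,i)) * U' t $$ (l,j) + cnj (U' t $$ (l,i)) * U t $$ (l,j))) (at t within {0..tau})"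
      unfolding f_def
      by (intro has_vector_derivative_sum has_vector_derivative_mult has_vector_derivative_cnj der) (use ij in auto)
    moreover have "(\<Sum>l<N. cnj (U t $$ (l,i)) * U' t $$ (l,j) + cnj (U' t $$ (l,i)) * U t $$ (l,j)) = 0"
    proof -
      let ?h = "H (lam t)" and ?u = "U t"
      define X where "X = (\<Sum>l<N. \<Sum>r<N. cnj (?u $$ (l,i)) * ?h $$ (l,r) * ?u $$ (r,j))"
      have 1: "(\<Sum>l<N. cnj (?u $$ (l,i)) * U' t $$ (l,j)) = c * X"
        unfolding X_def using U'e[OF t] ij
        by (simp add: sum_distrib_left mult_ac)
      have "(\<Sum>l<N. cnj (U' t $$ (l,i)) * ?u $$ (l,j)) =
            (\<Sum>l<N. \<Sum>r<N. cnj c * (cnj (?u $$ (r,i)) * ?h $$ (r,l) * ?u $$ (l,j)))"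
        using U'e[OF t] ij herm_entry[OF herm]
        by (simp add: sum_distrib_left sum_distrib_right mult_ac)
      also have "\<dots> = cnj c * X"
        unfolding X_def by (subst sum.swap) (simp add: sum_distrib_left)
      finally show ?thesis using 1 cc by (simp add: sum.distrib)
    qed
    ultimately show "(f has_vector_derivative 0) (at t within {0..tau})" by simp
  qed
  moreover have "f 0 = (if i = j then 1 else 0)"
  proof -
    have "f 0 = (\<Sum>l<N. if l = i then (if i = j then 1 else 0) else 0)"
      unfolding f_def U_init using ij by (intro sum.cong) auto
    thus ?thesis using ij by simp
  qed
  ultimately show ?thesis unfolding f_def by simp
qed


lemma sum_shift1: "(\<Sum>k=1..N. g k) = (\<Sum>k<N. g (Suc k) :: 'a :: comm_monoid_add)"
  by (induction N) auto

lemma cinner_cnj: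
  fixes v w :: "complex vec"
  assumes "v \<in> carrier_vec n" "w \<in> carrier_vec n"
  shows "v \<bullet>c w = cnj (w \<bullet>c v)"
  using assms by (simp add: cinner_sum mult.commute)

lemma completeness:
  fixes f :: "nat \<Rightarrow> complex vec"
  assumes car: "\<And>k. k \<in> {1..N} \<Longrightarrow> f k \<in> carrier_vec N"
    and on: "\<And>k m. k \<in> {1..N} \<Longrightarrow> m \<in> {1..N} \<Longrightarrow> f k \<bullet>c f m = (if k = m then 1 else 0)"
    and ij: "i < N" "j < N"
  shows "(\<Sum>k=1..N. f k $ i * cnj (f k $ j)) = (if i = j then 1 else 0)"
proof -
  define B where "B = mat N N (\<lambda>(i,k). f (Suc k) $ i)"
  define Bh where "Bh = mat N N (\<lambda>(k,i). cnj (f (Suc k) $ i))"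
  have Bc: "B \<in> carrier_mat N N" "Bh \<in> carrier_mat N N" unfolding B_def Bh_def by auto
  have "Bh * B = 1\<^sub>m N"
  proof (rule eq_matI)
    fix k m assume km: "k < dim_row (1\<^sub>m N :: complex mat)" "m < dim_col (1\<^sub>m N :: complex mat)"
    have "(Bh * B) $$ (k,m) = (\<Sum>i<N. f (Suc m) $ i * cnj (f (Suc k) $ i))"
      using km by (subst mult_mat_index[OF Bc(2) Bc(1)]) (auto simp: B_def Bh_def mult.commute)
    also have "\<dots> = f (Suc m) \<bullet>c f (Suc k)"
      using car[of "Suc m"] car[of "Suc k"] km by (simp add: cinner_sum)
    also have "\<dots> = (if k = m then 1 else 0)" using on km by auto
    finally show "(Bh * B) $$ (k,m) = 1\<^sub>m N $$ (k,m)" using km by simp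
  qed (auto simp: B_def Bh_def)
  hence "B * Bh = 1\<^sub>m N" using mat_mult_left_right_inverse[OF Bc(2) Bc(1)] by simp
  hence "(B * Bh) $$ (i,j) = (if i = j then 1 else 0)" using ij by simp
  moreover have "(B * Bh) $$ (i,j) = (\<Sum>k<N. f (Suc k) $ i * cnj (f (Suc k) $ j))"
    using ij by (subst mult_mat_index[OF Bc(1) Bc(2)]) (auto simp: B_def Bh_def)
  ultimately show ?thesis using sum_shift1[of "\<lambda>k. f k $ i * cnj (f k $ j)" N] by simp
qed

lemma parseval:
  fixes f :: "nat \<Rightarrow> complex vec"
  assumes car: "\<And>k. k \<in> {1..N} \<Longrightarrow> f k \<in> carrier_vec N"
    and on: "\<And>k m. k \<in> {1..N} \<Longrightarrow> m \<in> {1..N} \<Longrightarrow> f k \<bullet>c f m = (if k = m then 1 else 0)"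
    and v: "v \<in> carrier_vec N"
  shows "(\<Sum>k=1..N. (v \<bullet>c f k) * cnj (v \<bullet>c f k)) = v \<bullet>c v"
proof -
  have "(\<Sum>k=1..N. (v \<bullet>c f k) * cnj (v \<bullet>c f k)) =
     (\<Sum>k=1..N. \<Sum>i<N. \<Sum>j<N. v $ j * cnj (v $ i) * (f k $ i * cnj (f k $ j)))"
    using car v by (simp add: cinner_sum sum_distrib_left sum_distrib_right mult_ac)
  also have "\<dots> = (\<Sum>i<N. \<Sum>k=1..N. \<Sum>j<N. v $ j * cnj (v $ i) * (f k $ i * cnj (f k $ j)))"
    by (rule sum.swap)
  also have "\<dots> = (\<Sum>i<N. \<Sum>j<N. \<Sum>k=1..N. v $ j * cnj (v $ i) * (f k $ i * cnj (f k $ j)))"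
    by (rule sum.cong[OF refl], rule sum.swap)
  also have "\<dots> = (\<Sum>i<N. \<Sum>j<N. v $ j * cnj (v $ i) * (\<Sum>k=1..N. f k $ i * cnj (f k $ j)))"
    by (simp add: sum_distrib_left)
  also have "\<dots> = (\<Sum>i<N. \<Sum>j<N. v $ j * cnj (v $ i) * (if i = j then 1 else 0))"
    apply (intro sum.cong refl) apply (subst completeness[OF car on]) by auto
  also have "\<dots> = v \<bullet>c v" using v by (simp add: cinner_sum if_distrib cong: if_cong)
  finally show ?thesis .
qed

lemma isometry:
  fixes X :: "complex mat"
  assumes X: "X \<in> carrier_mat N N"
    and XX: "\<And>i j. i < N \<Longrightarrow> j < N \<Longrightarrow> (\<Sum>l<N. cnj (X $$ (l,i)) * X $$ (l,j)) = (if i = j then 1 else 0)"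
    and v: "v \<in> carrier_vec N"
  shows "(X *\<^sub>v v) \<bullet>c (X *\<^sub>v v) = v \<bullet>c v"
proof -
  have Xv: "X *\<^sub>v v \<in> carrier_vec N" using mult_mat_vec_carrier[OF X v] .
  have "(X *\<^sub>v v) \<bullet>c (X *\<^sub>v v) = (\<Sum>l<N. \<Sum>i<N. \<Sum>j<N. v $ j * cnj (v $ i) * (cnj (X $$ (l,i)) * X $$ (l,j)))"
  proof -
    have e: "\<And>i. i < N \<Longrightarrow> (X *\<^sub>v v) $ i = (\<Sum>l<N. X $$ (i,l) * v $ l)"
      using mult_vec_index[OF X v] by blast
    have "(X *\<^sub>v v) \<bullet>c (X *\<^sub>v v) = (\<Sum>l<N. (\<Sum>j<N. X $$ (l,j) * v $ j) * cnj (\<Sum>i<N. X $$ (l,i) * v $ i))"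
      unfolding cinner_sum[OF Xv Xv] by (simp add: e)
    also have "\<dots> = (\<Sum>l<N. \<Sum>i<N. \<Sum>j<N. v $ j * cnj (v $ i) * (cnj (X $$ (l,i)) * X $$ (l,j)))"
      by (simp add: sum_distrib_left sum_distrib_right mult_ac)
    finally show ?thesis .
  qed
  also have "\<dots> = (\<Sum>i<N. \<Sum>l<N. \<Sum>j<N. v $ j * cnj (v $ i) * (cnj (X $$ (l,i)) * X $$ (l,j)))"
    by (rule sum.swap)
  also have "\<dots> = (\<Sum>i<N. \<Sum>j<N. \<Sum>l<N. v $ j * cnj (v $ i) * (cnj (X $$ (l,i)) * X $$ (l,j)))"
    by (rule sum.cong[OF refl], rule sum.swap)
  also have "\<dots> = (\<Sum>i<N. \<Sum>j<N. v $ j * cnj (v $ i) * (\<Sum>l<N. cnj (X $$ (l,i)) * X $$ (l,j)))"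
    by (simp add: sum_distrib_left)
  also have "\<dots> = (\<Sum>i<N. \<Sum>j<N. v $ j * cnj (v $ i) * (if i = j then 1 else 0))"
    by (intro sum.cong refl) (simp add: XX)
  also have "\<dots> = v \<bullet>c v" using v by (simp add: cinner_sum if_distrib cong: if_cong)
  finally show ?thesis .
qed

lemma adjoint_move:
  fixes X :: "complex mat"
  assumes X: "X \<in> carrier_mat N N" and v: "v \<in> carrier_vec N" and w: "w \<in> carrier_vec N"
  shows "(X *\<^sub>v v) \<bullet>c w = v \<bullet>c (mat_adjoint X *\<^sub>v w)"
proof -
  have Xh: "mat_adjoint X \<in> carrier_mat N N" using adjoint_carrier[OF X] .
  have "(X *\<^sub>v v) \<bullet>c w = (\<Sum>i<N. \<Sum>l<N. X $$ (i,l) * v $ l * cnj (w $ i))"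
  proof -
    have e: "\<And>i. i < N \<Longrightarrow> (X *\<^sub>v v) $ i = (\<Sum>l<N. X $$ (i,l) * v $ l)"
      using mult_vec_index[OF X v] by blast
    show ?thesis unfolding cinner_sum[OF mult_mat_vec_carrier[OF X v] w] by (simp add: e sum_distrib_right)
  qed
  also have "\<dots> = (\<Sum>l<N. \<Sum>i<N. X $$ (i,l) * v $ l * cnj (w $ i))" by (rule sum.swap)
  also have "\<dots> = v \<bullet>c (mat_adjoint X *\<^sub>v w)"
  proof -
    have e: "\<And>i. i < N \<Longrightarrow> (mat_adjoint X *\<^sub>v w) $ i = (\<Sum>l<N. cnj (X $$ (l,i)) * w $ l)"
      using mult_vec_index[OF Xh w] unfolding adjoint_index[OF X] by simp
    show ?thesis unfolding cinner_sum[OF v mult_mat_vec_carrier[OF Xh w]] by (simp add: e sum_distrib_left mult_ac)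
  qed
  finally show ?thesis .
qed


lemma ss_index:
  "l < N \<Longrightarrow> r < N \<Longrightarrow> spectral_sum N c v $$ (l,r) = (\<Sum>k=1..N. c k * v k $ l * cnj (v k $ r))"
  unfolding spectral_sum_def by simp

lemma ss_carrier: "spectral_sum N c v \<in> carrier_mat N N"
  unfolding spectral_sum_def by simp

lemma conj_spectral:
  fixes U :: "complex mat"
  assumes U: "U \<in> carrier_mat N N" and car: "\<And>k. k \<in> {1..N} \<Longrightarrow> v k \<in> carrier_vec N"
  shows "U * spectral_sum N c v * mat_adjoint U = spectral_sum N c (\<lambda>k. U *\<^sub>v v k)"
proof (rule eq_matI)
  have Uh: "mat_adjoint U \<in> carrier_mat N N" using adjoint_carrier[OF U] .
  have US: "U * spectral_sum N c v \<in> carrier_mat N N" using U ss_carrier by (rule mult_carrier_mat)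
  show "dim_row (U * spectral_sum N c v * mat_adjoint U) = dim_row (spectral_sum N c (\<lambda>k. U *\<^sub>v v k))"
    using U by (simp add: spectral_sum_def)
  show "dim_col (U * spectral_sum N c v * mat_adjoint U) = dim_col (spectral_sum N c (\<lambda>k. U *\<^sub>v v k))"
    using Uh by (simp add: spectral_sum_def)
  fix i j assume "i < dim_row (spectral_sum N c (\<lambda>k. U *\<^sub>v v k))" "j < dim_col (spectral_sum N c (\<lambda>k. U *\<^sub>v v k))"
  hence ij: "i < N" "j < N" by (auto simp: spectral_sum_def)
  define T where "T k l r = c k * U $$ (i,l) * v k $ l * cnj (v k $ r) * cnj (U $$ (j,r))" for k l r
  have "(U * spectral_sum N c v * mat_adjoint U) $$ (i,j) =
     (\<Sum>r<N. (\<Sum>l<N. U $$ (i,l) * spectral_sum N c v $$ (l,r)) * mat_adjoint U $$ (r,j))"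
    using mult_mat_index[OF US Uh ij] mult_mat_index[OF U ss_carrier ij(1)] by simp
  also have "\<dots> = (\<Sum>r<N. \<Sum>l<N. \<Sum>k=1..N. T k l r)"
    using ij by (simp add: ss_index adjoint_index[OF U] T_def sum_distrib_left sum_distrib_right mult_ac)
  also have "\<dots> = (\<Sum>l<N. \<Sum>r<N. \<Sum>k=1..N. T k l r)" by (rule sum.swap)
  also have "\<dots> = (\<Sum>l<N. \<Sum>k=1..N. \<Sum>r<N. T k l r)" by (rule sum.cong[OF refl], rule sum.swap)
  also have "\<dots> = (\<Sum>k=1..N. \<Sum>l<N. \<Sum>r<N. T k l r)" by (rule sum.swap)
  also have "\<dots> = (\<Sum>k=1..N. c k * (\<Sum>l<N. U $$ (i,l) * v k $ l) * cnj (\<Sum>r<N. U $$ (j,r) * v k $ r))"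
    by (simp add: T_def sum_distrib_left sum_distrib_right mult_ac)
  also have "\<dots> = spectral_sum N c (\<lambda>k. U *\<^sub>v v k) $$ (i,j)"
    using ij car mult_vec_index[OF U] by (simp add: ss_index del: index_mult_mat_vec)
  finally show "(U * spectral_sum N c v * mat_adjoint U) $$ (i,j) = spectral_sum N c (\<lambda>k. U *\<^sub>v v k) $$ (i,j)" .
qed

lemma trace_ss:
  assumes carv: "\<And>k. k \<in> {1..N} \<Longrightarrow> v k \<in> carrier_vec N"
    and carw: "\<And>k. k \<in> {1..N} \<Longrightarrow> w k \<in> carrier_vec N"
  shows "mat_trace (spectral_sum N c v * spectral_sum N d w) =
    (\<Sum>k=1..N. \<Sum>m=1..N. c k * d m * ((v k \<bullet>c w m) * cnj (v k \<bullet>c w m)))"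
proof -
  define T where "T i l k m = c k * d m * (v k $ i * cnj (w m $ i)) * (cnj (v k $ l) * w m $ l)" for i l k m
  have "mat_trace (spectral_sum N c v * spectral_sum N d w) =
     (\<Sum>i<N. \<Sum>l<N. spectral_sum N c v $$ (i,l) * spectral_sum N d w $$ (l,i))"
  proof -
    have "dim_row (spectral_sum N c v * spectral_sum N d w) = N" by (simp add: spectral_sum_def)
    thus ?thesis unfolding mat_trace_def
      by (intro sum.cong) (auto simp: mult_mat_index[OF ss_carrier ss_carrier] simp del: index_mult_mat)
  qed
  also have "\<dots> = (\<Sum>i<N. \<Sum>l<N. \<Sum>m=1..N. \<Sum>k=1..N. T i l k m)"
    by (simp add: ss_index T_def sum_distrib_left sum_distrib_right mult_ac)
  also have "\<dots> = (\<Sum>i<N. \<Sum>l<N. \<Sum>k=1..N. \<Sum>m=1..N. T i l k m)"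
    by (rule sum.cong[OF refl], rule sum.cong[OF refl], rule sum.swap)
  also have "\<dots> = (\<Sum>i<N. \<Sum>k=1..N. \<Sum>l<N. \<Sum>m=1..N. T i l k m)" by (rule sum.cong[OF refl], rule sum.swap)
  also have "\<dots> = (\<Sum>k=1..N. \<Sum>i<N. \<Sum>l<N. \<Sum>m=1..N. T i l k m)" by (rule sum.swap)
  also have "\<dots> = (\<Sum>k=1..N. \<Sum>i<N. \<Sum>m=1..N. \<Sum>l<N. T i l k m)"
    by (rule sum.cong[OF refl], rule sum.cong[OF refl], rule sum.swap)
  also have "\<dots> = (\<Sum>k=1..N. \<Sum>m=1..N. \<Sum>i<N. \<Sum>l<N. T i l k m)"
    by (rule sum.cong[OF refl], rule sum.swap)
  also have "\<dots> = (\<Sum>k=1..N. \<Sum>m=1..N. c k * d m * ((\<Sum>i<N. v k $ i * cnj (w m $ i)) * cnj (\<Sum>l<N. v k $ l * cnj (w m $ l))))"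
    apply (simp add: T_def sum_distrib_left sum_distrib_right mult_ac)
    apply (rule sum.cong[OF refl], rule sum.cong[OF refl], rule sum.swap)
    done
  also have "\<dots> = (\<Sum>k=1..N. \<Sum>m=1..N. c k * d m * ((v k \<bullet>c w m) * cnj (v k \<bullet>c w m)))"
    by (intro sum.cong refl) (simp add: cinner_sum[OF carv carw])
  finally show ?thesis .
qed



lemma sum_if_le:
  fixes f :: "nat \<Rightarrow> real"
  assumes "1 \<le> m" "m \<le> N"
  shows "(\<Sum>k=1..N. if k \<le> m then f k else 0) = (\<Sum>k=1..m. f k)"
proof -
  have "(\<Sum>k=1..N. if k \<le> m then f k else 0) = (\<Sum>k\<in>{k\<in>{1..N}. k \<le> m}. f k)"
    by (subst sum.inter_filter) auto
  also have "{k\<in>{1..N}. k \<le> m} = {1..m}" using assms by auto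
  finally show ?thesis .
qed

lemma sum_if_ge:
  fixes f :: "nat \<Rightarrow> real"
  assumes "1 \<le> j" "j \<le> N"
  shows "(\<Sum>m=1..N. if j \<le> m then f m else 0) = (\<Sum>m=j..N. f m)"
proof -
  have "(\<Sum>m=1..N. if j \<le> m then f m else 0) = (\<Sum>m\<in>{m\<in>{1..N}. j \<le> m}. f m)"
    by (subst sum.inter_filter) auto
  also have "{m\<in>{1..N}. j \<le> m} = {j..N}" using assms by auto
  finally show ?thesis .
qed

lemma elem_ineq:
  fixes x w :: "nat \<Rightarrow> real"
  assumes mono: "\<And>a b. a \<in> {1..N} \<Longrightarrow> b \<in> {1..N} \<Longrightarrow> a \<le> b \<Longrightarrow> x a \<le> x b"
    and w01: "\<And>k. k \<in> {1..N} \<Longrightarrow> 0 \<le> w k \<and> w k \<le> 1"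
    and ws: "(\<Sum>k=1..N. w k) = real m" and m: "1 \<le> m" "m \<le> N"
  shows "(\<Sum>k=1..m. x k) \<le> (\<Sum>k=1..N. x k * w k)"
proof -
  define ind where "ind k = (if k \<le> m then 1 else (0::real))" for k
  have "0 \<le> (\<Sum>k=1..N. (x k - x m) * (w k - ind k))"
  proof (rule sum_nonneg)
    fix k assume k: "k \<in> {1..N}"
    show "0 \<le> (x k - x m) * (w k - ind k)"
    proof (cases "k \<le> m")
      case True
      then have "x k - x m \<le> 0" "w k - ind k \<le> 0" using mono[of k m] k m w01[OF k] by (auto simp: ind_def)
      then show ?thesis by (simp add: mult_nonpos_nonpos)
    next
      case False
      then have "x k - x m \<ge> 0" "w k - ind k \<ge> 0" using mono[of m k] k m w01[OF k] by (auto simp: ind_def)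
      then show ?thesis by simp
    qed
  qed
  also have "(\<Sum>k=1..N. (x k - x m) * (w k - ind k)) =
      (\<Sum>k=1..N. x k * w k) - (\<Sum>k=1..N. x k * ind k) - x m * (\<Sum>k=1..N. w k) + x m * (\<Sum>k=1..N. ind k)"
    by (simp add: algebra_simps sum.distrib sum_subtractf sum_distrib_left)
  also have "(\<Sum>k=1..N. x k * ind k) = (\<Sum>k=1..m. x k)"
    using sum_if_le[OF m, of x] by (simp add: ind_def if_distrib cong: if_cong)
  also have "(\<Sum>k=1..N. ind k) = real m"
    using sum_if_le[OF m, of "\<lambda>_. 1"] by (simp add: ind_def)
  finally show ?thesis using ws by simp
qed

lemma majorization:
  fixes M :: "nat \<Rightarrow> nat \<Rightarrow> real" and x p :: "nat \<Rightarrow> real"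
  assumes mono: "\<And>a b. a \<in> {1..N} \<Longrightarrow> b \<in> {1..N} \<Longrightarrow> a \<le> b \<Longrightarrow> x a \<le> x b"
    and Mnn: "\<And>q j. q \<in> {1..N} \<Longrightarrow> j \<in> {1..N} \<Longrightarrow> 0 \<le> M q j"
    and rows: "\<And>q. q \<in> {1..N} \<Longrightarrow> (\<Sum>j=1..N. M q j) = 1"
    and cols: "\<And>j. j \<in> {1..N} \<Longrightarrow> (\<Sum>q=1..N. M q j) = 1"
    and pnn: "\<And>k. k \<in> {1..N} \<Longrightarrow> 0 \<le> p k"
    and panti: "\<And>a b. a \<in> {1..N} \<Longrightarrow> b \<in> {1..N} \<Longrightarrow> a \<le> b \<Longrightarrow> p b \<le> p a"
  shows "(\<Sum>j=1..N. x j * p j) \<le> (\<Sum>q=1..N. x q * (\<Sum>j=1..N. M q j * p j))"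
proof -
  define y where "y j = (\<Sum>q=1..N. x q * M q j) - x j" for j
  define p' where "p' m = (if m \<le> N then p m else 0)" for m
  define d where "d m = p' m - p' (Suc m)" for m
  have dnn: "0 \<le> d m" if "m \<in> {1..N}" for m
    using that pnn panti[of m "Suc m"] unfolding d_def p'_def by auto
  have pd: "p j = (\<Sum>m=j..N. d m)" if "j \<in> {1..N}" for j
  proof -
    have "(\<Sum>m=j..N. p' (Suc m) - p' m) = p' (Suc N) - p' j" using that by (intro sum_Suc_diff) auto
    hence "(\<Sum>m=j..N. d m) = p' j - p' (Suc N)" unfolding d_def
      by (simp add: sum_subtractf)
    thus ?thesis using that by (simp add: p'_def)
  qed
  have "(\<Sum>q=1..N. x q * (\<Sum>j=1..N. M q j * p j)) - (\<Sum>j=1..N. x j * p j) = (\<Sum>j=1..N. p j * y j)"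
  proof -
    have "(\<Sum>q=1..N. x q * (\<Sum>j=1..N. M q j * p j)) = (\<Sum>j=1..N. p j * (\<Sum>q=1..N. x q * M q j))"
      unfolding sum_distrib_left by (subst sum.swap) (simp add: mult_ac)
    thus ?thesis by (simp add: y_def algebra_simps sum_subtractf)
  qed
  also have "\<dots> = (\<Sum>j=1..N. \<Sum>m=1..N. if j \<le> m then d m * y j else 0)"
  proof (intro sum.cong refl)
    fix j assume j: "j \<in> {1..N}"
    have "p j * y j = (\<Sum>m=j..N. d m * y j)" using pd[OF j] by (simp add: sum_distrib_right)
    also have "\<dots> = (\<Sum>m=1..N. if j \<le> m then d m * y j else 0)"
      using sum_if_ge[of j N "\<lambda>m. d m * y j"] j by simp
    finally show "p j * y j = (\<Sum>m=1..N. if j \<le> m then d m * y j else 0)" .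
  qed
  also have "\<dots> = (\<Sum>m=1..N. \<Sum>j=1..N. if j \<le> m then d m * y j else 0)" by (rule sum.swap)
  also have "\<dots> = (\<Sum>m=1..N. d m * (\<Sum>j=1..m. y j))"
  proof (intro sum.cong refl)
    fix m assume m: "m \<in> {1..N}"
    show "(\<Sum>j=1..N. if j \<le> m then d m * y j else 0) = d m * (\<Sum>j=1..m. y j)"
      using sum_if_le[of m N "\<lambda>j. d m * y j"] m by (simp add: sum_distrib_left)
  qed
  also have "\<dots> \<ge> 0"
  proof (rule sum_nonneg)
    fix m assume m: "m \<in> {1..N}"
    define w where "w q = (\<Sum>j=1..m. M q j)" for q
    have w01: "0 \<le> w q \<and> w q \<le> 1" if q: "q \<in> {1..N}" for q
    proof
      show "0 \<le> w q" unfolding w_def using Mnn q m by (intro sum_nonneg) auto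
      have "w q \<le> (\<Sum>j=1..N. M q j)" unfolding w_def using Mnn q m by (intro sum_mono2) auto
      thus "w q \<le> 1" using rows[OF q] by simp
    qed
    have ws: "(\<Sum>q=1..N. w q) = real m"
    proof -
      have "(\<Sum>q=1..N. w q) = (\<Sum>j=1..m. \<Sum>q=1..N. M q j)" unfolding w_def by (rule sum.swap)
      also have "\<dots> = (\<Sum>j=1..m. 1)" using cols m by (intro sum.cong) auto
      finally show ?thesis by simp
    qed
    have "(\<Sum>k=1..m. x k) \<le> (\<Sum>k=1..N. x k * w k)"
      using elem_ineq[OF mono w01 ws] m by auto
    moreover have "(\<Sum>j=1..m. y j) = (\<Sum>k=1..N. x k * w k) - (\<Sum>k=1..m. x k)"
    proof -
      have "(\<Sum>j=1..m. \<Sum>q=1..N. x q * M q j) = (\<Sum>k=1..N. x k * w k)"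
        unfolding w_def sum_distrib_left by (rule sum.swap)
      thus ?thesis unfolding y_def by (simp add: sum_subtractf)
    qed
    ultimately show "0 \<le> d m * (\<Sum>j=1..m. y j)" using dnn[OF m] by simp
  qed
  finally show ?thesis by simp
qed



lemma degset_self: "k \<in> {1..N} \<Longrightarrow> k \<in> degset N eps l k"
  unfolding degset_def by auto

lemma degset_finite: "finite (degset N eps l k)"
  unfolding degset_def by auto

lemma degeneracy_pos: "k \<in> {1..N} \<Longrightarrow> 0 < degeneracy N eps l k"
  unfolding degeneracy_def using degset_self degset_finite by (metis card_gt_0_iff empty_iff)

lemma degset_eq: "eps l q = eps l k \<Longrightarrow> degset N eps l q = degset N eps l k"
  unfolding degset_def by auto

lemma ln_geom:
  assumes "k \<in> {1..N}"
  shows "ln (geomlabel N eps l k) = (\<Sum>q\<in>degset N eps l k. ln (real q)) / real (degeneracy N eps l k)"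
proof -
  have "ln (\<Prod>q\<in>degset N eps l k. real q) = (\<Sum>q\<in>degset N eps l k. ln (real q))"
    by (rule ln_prod) (auto simp: degset_finite degset_def)
  thus ?thesis unfolding geomlabel_def by simp
qed

lemma sum_degset:
  fixes f :: "nat \<Rightarrow> real"
  shows "(\<Sum>q\<in>degset N eps l k. f q) = (\<Sum>q=1..N. if eps l q = eps l k then f q else 0)"
  unfolding degset_def by (subst sum.inter_filter) auto

lemma block_swap:
  fixes x y :: "nat \<Rightarrow> real"
  shows "(\<Sum>k=1..N. y k * ((\<Sum>q\<in>degset N eps l k. x q) / real (degeneracy N eps l k))) =
         (\<Sum>q=1..N. x q * ((\<Sum>k\<in>degset N eps l q. y k) / real (degeneracy N eps l q)))"
proof -
  have "(\<Sum>k=1..N. y k * ((\<Sum>q\<in>degset N eps l k. x q) / real (degeneracy N eps l k))) =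
        (\<Sum>k=1..N. \<Sum>q=1..N. if eps l q = eps l k then x q * y k / real (degeneracy N eps l q) else 0)"
  proof (intro sum.cong refl)
    fix k
    have "y k * ((\<Sum>q\<in>degset N eps l k. x q) / real (degeneracy N eps l k)) =
      (\<Sum>q=1..N. if eps l q = eps l k then x q * y k / real (degeneracy N eps l k) else 0)"
      by (simp add: sum_degset sum_distrib_left sum_divide_distrib) (intro sum.cong refl, simp)
    also have "\<dots> = (\<Sum>q=1..N. if eps l q = eps l k then x q * y k / real (degeneracy N eps l q) else 0)"
      by (intro sum.cong refl) (metis degeneracy_def degset_eq)
    finally show "y k * ((\<Sum>q\<in>degset N eps l k. x q) / real (degeneracy N eps l k)) =
      (\<Sum>q=1..N. if eps l q = eps l k then x q * y k / real (degeneracy N eps l q) else 0)" .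
  qed
  also have "\<dots> = (\<Sum>q=1..N. \<Sum>k=1..N. if eps l q = eps l k then x q * y k / real (degeneracy N eps l q) else 0)"
    by (rule sum.swap)
  also have "\<dots> = (\<Sum>q=1..N. x q * ((\<Sum>k\<in>degset N eps l q. y k) / real (degeneracy N eps l q)))"
    by (intro sum.cong refl)
       (simp add: sum_degset sum_distrib_left sum_divide_distrib, intro sum.cong refl, simp)
  finally show ?thesis .
qed


lemma re_sum_sq:
  fixes x y :: "nat \<Rightarrow> real" and z :: "nat \<Rightarrow> nat \<Rightarrow> complex"
  shows "Re (\<Sum>k\<in>A. \<Sum>m\<in>B. complex_of_real (x k) * complex_of_real (y m) * (z k m * cnj (z k m))) =
    (\<Sum>k\<in>A. \<Sum>m\<in>B. x k * y m * (cmod (z k m))^2)"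
  by (simp add: complex_norm_square[symmetric] Re_sum del: of_real_power)

lemma sum_sq_one:
  fixes z :: "nat \<Rightarrow> complex"
  assumes "(\<Sum>k\<in>A. z k * cnj (z k)) = 1"
  shows "(\<Sum>k\<in>A. (cmod (z k))^2) = 1"
proof -
  have "complex_of_real (\<Sum>k\<in>A. (cmod (z k))^2) = 1"
    using assms by (simp add: complex_norm_square[symmetric] del: of_real_power)
  thus ?thesis by (metis of_real_eq_1_iff)
qed

theorem theorem2:
  fixes N :: nat and hbar tau :: real
    and H :: "real \<Rightarrow> complex mat"
    and lam :: "real \<Rightarrow> real"
    and U U' :: "real \<Rightarrow> complex mat"
    and psi :: "real \<Rightarrow> nat \<Rightarrow> complex vec"
    and eps :: "real \<Rightarrow> nat \<Rightarrow> real"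
    and p :: "nat \<Rightarrow> real"
  assumes hbar_pos: "hbar > 0"
    and tau_nonneg: "0 \<le> tau"
    and herm: "\<And>l. hermitian_mat N (H l)"
    and U_carrier: "\<And>t. t \<in> {0..tau} \<Longrightarrow> U t \<in> carrier_mat N N"
    and U_deriv: "\<And>t. t \<in> {0..tau} \<Longrightarrow> mat_has_derivative_within N U (U' t) t {0..tau}"
    and schroedinger: "\<And>t. t \<in> {0..tau} \<Longrightarrow> (\<i> * complex_of_real hbar) \<cdot>\<^sub>m U' t = H (lam t) * U t"
    and U_init: "U 0 = 1\<^sub>m N"
    and psi_carrier: "\<And>l k. k \<in> {1..N} \<Longrightarrow> psi l k \<in> carrier_vec N"
    and psi_eigen: "\<And>l k. k \<in> {1..N} \<Longrightarrow> H l *\<^sub>v psi l k = complex_of_real (eps l k) \<cdot>\<^sub>v psi l k"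
    and psi_orthonormal: "\<And>l k m. k \<in> {1..N} \<Longrightarrow> m \<in> {1..N} \<Longrightarrow>
        psi l k \<bullet>c psi l m = (if k = m then 1 else 0)"
    and eps_ordered: "\<And>t k m. t \<in> {0..tau} \<Longrightarrow> k \<in> {1..N} \<Longrightarrow> m \<in> {1..N} \<Longrightarrow> m < k \<Longrightarrow>
        eps (lam t) m \<le> eps (lam t) k"
    and p_nonneg: "\<And>k. k \<in> {1..N} \<Longrightarrow> p k \<ge> 0"
    and p_sum: "(\<Sum>k=1..N. p k) = 1"
    and p_degenerate: "\<And>k m. k \<in> {1..N} \<Longrightarrow> m \<in> degset N eps (lam 0) k \<Longrightarrow> p k = p m"
    and p_ordered: "\<And>k m. k \<in> {1..N} \<Longrightarrow> m \<in> {1..N} \<Longrightarrow> m < k \<Longrightarrow> p k \<le> p m"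
  shows
    "let rho0 = spectral_sum N (\<lambda>k. complex_of_real (p k)) (psi (lam 0));
         rho = (\<lambda>t. U t * rho0 * mat_adjoint (U t));
         S = (\<lambda>t. Re (mat_trace (rho t * entropy_op N eps psi (lam t))))
     in S tau \<ge> S 0"
  
proof -
  define a where "a = psi (lam 0)"
  define b where "b = psi (lam tau)"
  define UT where "UT = U tau"
  define rho0 where "rho0 = spectral_sum N (\<lambda>k. complex_of_real (p k)) a"
  have tau_in: "tau \<in> {0..tau}" and zero_in: "0 \<in> {0..tau}" using tau_nonneg by auto
  have UTc: "UT \<in> carrier_mat N N" unfolding UT_def using U_carrier[OF tau_in] .
  have acar: "\<And>k. k \<in> {1..N} \<Longrightarrow> a k \<in> carrier_vec N" unfolding a_def using psi_carrier .
  have bcar: "\<And>k. k \<in> {1..N} \<Longrightarrow> b k \<in> carrier_vec N" unfolding b_def using psi_carrier .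
  have aon: "\<And>k m. k \<in> {1..N} \<Longrightarrow> m \<in> {1..N} \<Longrightarrow> a k \<bullet>c a m = (if k = m then 1 else 0)"
    unfolding a_def using psi_orthonormal .
  have bon: "\<And>k m. k \<in> {1..N} \<Longrightarrow> m \<in> {1..N} \<Longrightarrow> b k \<bullet>c b m = (if k = m then 1 else 0)"
    unfolding b_def using psi_orthonormal .
  have UhU: "\<And>i j. i < N \<Longrightarrow> j < N \<Longrightarrow> (\<Sum>l<N. cnj (UT $$ (l,i)) * UT $$ (l,j)) = (if i = j then 1 else 0)"
    unfolding UT_def
    by (rule unitary_from_ode[where hbar=hbar and tau=tau and N=N and H=H and lam=lam and U=U and U'=U', OF hbar_pos tau_nonneg herm U_carrier U_deriv schroedinger U_init])
  have UThc: "mat_adjoint UT \<in> carrier_mat N N" using adjoint_carrier[OF UTc] .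
  have "mat_adjoint UT * UT = 1\<^sub>m N"
  proof (rule eq_matI)
    fix i j assume "i < dim_row (1\<^sub>m N :: complex mat)" "j < dim_col (1\<^sub>m N :: complex mat)"
    hence ij: "i < N" "j < N" by auto
    show "(mat_adjoint UT * UT) $$ (i,j) = 1\<^sub>m N $$ (i,j)"
      using ij UhU[OF ij] by (subst mult_mat_index[OF UThc UTc ij]) (simp add: adjoint_index[OF UTc])
  qed (use UThc UTc in auto)
  hence UUh1: "UT * mat_adjoint UT = 1\<^sub>m N" using mat_mult_left_right_inverse[OF UThc UTc] by simp
  have UUh: "\<And>i j. i < N \<Longrightarrow> j < N \<Longrightarrow>
     (\<Sum>l<N. cnj (mat_adjoint UT $$ (l,i)) * mat_adjoint UT $$ (l,j)) = (if i = j then 1 else 0)"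
  proof -
    fix i j assume ij: "i < N" "j < N"
    have "(\<Sum>l<N. cnj (mat_adjoint UT $$ (l,i)) * mat_adjoint UT $$ (l,j)) = (UT * mat_adjoint UT) $$ (i,j)"
      using ij by (subst mult_mat_index[OF UTc UThc ij]) (simp add: adjoint_index[OF UTc])
    thus "(\<Sum>l<N. cnj (mat_adjoint UT $$ (l,i)) * mat_adjoint UT $$ (l,j)) = (if i = j then 1 else 0)"
      using UUh1 ij by simp
  qed
  have Sgen: "Re (mat_trace (V * rho0 * mat_adjoint V * spectral_sum N (\<lambda>k. complex_of_real (e k)) w)) =
     (\<Sum>k=1..N. \<Sum>m=1..N. p k * e m * (cmod ((V *\<^sub>v a k) \<bullet>c w m))^2)"
    if V: "V \<in> carrier_mat N N" and wc: "\<And>k. k \<in> {1..N} \<Longrightarrow> w k \<in> carrier_vec N" for V e w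
  proof -
    have eq: "V * rho0 * mat_adjoint V = spectral_sum N (\<lambda>k. complex_of_real (p k)) (\<lambda>k. V *\<^sub>v a k)"
      unfolding rho0_def using conj_spectral[OF V acar] .
    have vc: "\<And>k. k \<in> {1..N} \<Longrightarrow> V *\<^sub>v a k \<in> carrier_vec N"
      using V acar by (simp add: mult_mat_vec_carrier)
    have "mat_trace (V * rho0 * mat_adjoint V * spectral_sum N (\<lambda>k. complex_of_real (e k)) w) =
      (\<Sum>k=1..N. \<Sum>m=1..N. complex_of_real (p k) * complex_of_real (e m) * (((V *\<^sub>v a k) \<bullet>c w m) * cnj ((V *\<^sub>v a k) \<bullet>c w m)))"
      unfolding eq by (rule trace_ss[OF vc wc])
    thus ?thesis by (simp only: re_sum_sq)
  qed
  define cT where "cT k = ln (geomlabel N eps (lam tau) k)" for k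
  define c0 where "c0 k = ln (geomlabel N eps (lam 0) k)" for k
  define z where "z k m = (UT *\<^sub>v a k) \<bullet>c b m" for k m
  define D where "D m k = (cmod (z k m))^2" for m k
  have STau: "Re (mat_trace (UT * rho0 * mat_adjoint UT * entropy_op N eps psi (lam tau))) =
      (\<Sum>k=1..N. \<Sum>m=1..N. p k * cT m * D m k)"
    unfolding entropy_op_def using Sgen[OF UTc bcar[unfolded b_def]]
    by (simp add: cT_def D_def z_def b_def)
  have S0: "Re (mat_trace (U 0 * rho0 * mat_adjoint (U 0) * entropy_op N eps psi (lam 0))) =
      (\<Sum>k=1..N. p k * c0 k)"
  proof -
    have "Re (mat_trace (U 0 * rho0 * mat_adjoint (U 0) * entropy_op N eps psi (lam 0))) =
      (\<Sum>k=1..N. \<Sum>m=1..N. p k * c0 m * (cmod (a k \<bullet>c a m))^2)"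
      unfolding entropy_op_def U_init using Sgen[of "1\<^sub>m N" a] acar
      by (simp add: c0_def a_def)
    also have "\<dots> = (\<Sum>k=1..N. \<Sum>m=1..N. if m = k then p k * c0 k else 0)"
      by (intro sum.cong refl) (auto simp: aon)
    also have "\<dots> = (\<Sum>k=1..N. p k * c0 k)" by simp
    finally show ?thesis .
  qed
  have Dcol: "(\<Sum>m=1..N. D m k) = 1" if k: "k \<in> {1..N}" for k
  proof -
    have Uak: "UT *\<^sub>v a k \<in> carrier_vec N" using UTc acar[OF k] by (simp add: mult_mat_vec_carrier)
    have "(\<Sum>m=1..N. z k m * cnj (z k m)) = (UT *\<^sub>v a k) \<bullet>c (UT *\<^sub>v a k)"
      unfolding z_def by (rule parseval[OF bcar bon Uak])
    also have "\<dots> = a k \<bullet>c a k" by (rule isometry[OF UTc UhU acar[OF k]])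
    also have "\<dots> = 1" using aon k by simp
    finally show ?thesis unfolding D_def by (rule sum_sq_one)
  qed
  have Drow: "(\<Sum>k=1..N. D m k) = 1" if m: "m \<in> {1..N}" for m
  proof -
    define v where "v = mat_adjoint UT *\<^sub>v b m"
    have vc: "v \<in> carrier_vec N" unfolding v_def using UThc bcar[OF m] by (simp add: mult_mat_vec_carrier)
    have zk: "cmod (z k m) = cmod (v \<bullet>c a k)" if k: "k \<in> {1..N}" for k
    proof -
      have "z k m = a k \<bullet>c v" unfolding z_def v_def by (rule adjoint_move[OF UTc acar[OF k] bcar[OF m]])
      also have "\<dots> = cnj (v \<bullet>c a k)" by (rule cinner_cnj[OF acar[OF k] vc])
      finally show ?thesis by simp
    qed
    have "(\<Sum>k=1..N. (v \<bullet>c a k) * cnj (v \<bullet>c a k)) = v \<bullet>c v" by (rule parseval[OF acar aon vc])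
    also have "\<dots> = b m \<bullet>c b m" unfolding v_def by (rule isometry[OF UThc UUh bcar[OF m]])
    also have "\<dots> = 1" using bon m by simp
    finally have "(\<Sum>k=1..N. (cmod (v \<bullet>c a k))^2) = 1" by (rule sum_sq_one)
    thus ?thesis unfolding D_def using zk by simp
  qed
  have Dnn: "0 \<le> D m k" for m k unfolding D_def by simp
  define g where "g q = real (degeneracy N eps (lam tau) q)" for q
  define A where "A q = degset N eps (lam tau) q" for q
  define Mb where "Mb q k = (\<Sum>m\<in>A q. D m k) / g q" for q k
  have gpos: "0 < g q" if "q \<in> {1..N}" for q unfolding g_def using degeneracy_pos[OF that] by simp
  have Asub: "A q \<subseteq> {1..N}" for q unfolding A_def degset_def by auto
  have gA: "g q = (\<Sum>m\<in>A q. 1)" for q unfolding g_def A_def degeneracy_def by simp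
  have STau2: "(\<Sum>k=1..N. \<Sum>m=1..N. p k * cT m * D m k) = (\<Sum>q=1..N. ln (real q) * (\<Sum>k=1..N. Mb q k * p k))"
  proof -
    have "(\<Sum>k=1..N. \<Sum>m=1..N. p k * cT m * D m k) = (\<Sum>m=1..N. (\<Sum>k=1..N. D m k * p k) * cT m)"
      by (subst sum.swap) (simp add: sum_distrib_right sum_distrib_left mult_ac)
    also have "\<dots> = (\<Sum>m=1..N. (\<Sum>k=1..N. D m k * p k) * ((\<Sum>q\<in>A m. ln (real q)) / g m))"
      by (intro sum.cong refl) (simp add: cT_def ln_geom A_def g_def)
    also have "\<dots> = (\<Sum>q=1..N. ln (real q) * ((\<Sum>m\<in>A q. (\<Sum>k=1..N. D m k * p k)) / g q))"
      unfolding A_def g_def by (rule block_swap)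
    also have "\<dots> = (\<Sum>q=1..N. ln (real q) * (\<Sum>k=1..N. Mb q k * p k))"
      unfolding Mb_def by (intro sum.cong refl) (simp add: sum_divide_distrib sum_distrib_right sum.swap[of _ "A _"])
    finally show ?thesis .
  qed
  have S02: "(\<Sum>k=1..N. p k * c0 k) = (\<Sum>q=1..N. ln (real q) * p q)"
  proof -
    have "(\<Sum>k=1..N. p k * c0 k) = (\<Sum>k=1..N. p k * ((\<Sum>q\<in>degset N eps (lam 0) k. ln (real q)) / real (degeneracy N eps (lam 0) k)))"
      by (intro sum.cong refl) (simp add: c0_def ln_geom)
    also have "\<dots> = (\<Sum>q=1..N. ln (real q) * ((\<Sum>k\<in>degset N eps (lam 0) q. p k) / real (degeneracy N eps (lam 0) q)))"
      by (rule block_swap)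
    also have "\<dots> = (\<Sum>q=1..N. ln (real q) * p q)"
    proof (intro sum.cong refl)
      fix q assume q: "q \<in> {1..N}"
      have "(\<Sum>k\<in>degset N eps (lam 0) q. p k) = (\<Sum>k\<in>degset N eps (lam 0) q. p q)"
        using p_degenerate[OF q] by (intro sum.cong) auto
      also have "\<dots> = real (degeneracy N eps (lam 0) q) * p q" unfolding degeneracy_def by simp
      finally show "ln (real q) * ((\<Sum>k\<in>degset N eps (lam 0) q. p k) / real (degeneracy N eps (lam 0) q)) = ln (real q) * p q"
        using degeneracy_pos[OF q, of eps "lam 0"] by simp
    qed
    finally show ?thesis .
  qed
  have maj: "(\<Sum>j=1..N. ln (real j) * p j) \<le> (\<Sum>q=1..N. ln (real q) * (\<Sum>j=1..N. Mb q j * p j))"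
  proof (rule majorization)
    show "ln (real a) \<le> ln (real b)" if "a \<in> {1..N}" "b \<in> {1..N}" "a \<le> b" for a b
      using that by simp
    show "0 \<le> Mb q j" for q j unfolding Mb_def g_def by (intro divide_nonneg_nonneg sum_nonneg Dnn) simp
    show "(\<Sum>j=1..N. Mb q j) = 1" if q: "q \<in> {1..N}" for q
    proof -
      have "(\<Sum>j=1..N. Mb q j) = (\<Sum>m\<in>A q. \<Sum>j=1..N. D m j) / g q"
        unfolding Mb_def by (simp add: sum_divide_distrib[symmetric] sum.swap[of _ "A q"])
      also have "\<dots> = (\<Sum>m\<in>A q. 1) / g q" by (intro arg_cong2[where f="(/)"] sum.cong refl) (meson Asub Drow subsetD)
      also have "\<dots> = 1" using gA gpos[OF q] by simp
      finally show ?thesis .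
    qed
    show "(\<Sum>q=1..N. Mb q j) = 1" if j: "j \<in> {1..N}" for j
    proof -
      have "(\<Sum>q=1..N. Mb q j) = (\<Sum>q=1..N. 1 * ((\<Sum>m\<in>A q. D m j) / g q))" unfolding Mb_def by simp
      also have "\<dots> = (\<Sum>m=1..N. D m j * ((\<Sum>q\<in>A m. 1) / g m))"
        unfolding A_def g_def by (rule block_swap)
      also have "\<dots> = (\<Sum>m=1..N. D m j)"
      proof (intro sum.cong refl)
        fix m assume m: "m \<in> {1..N}"
        show "D m j * ((\<Sum>q\<in>A m. 1) / g m) = D m j" using gA[of m] gpos[OF m] by simp
      qed
      also have "\<dots> = 1" using Dcol[OF j] .
      finally show ?thesis .
    qed
    show "0 \<le> p k" if "k \<in> {1..N}" for k using p_nonneg that .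
    show "p b \<le> p a" if "a \<in> {1..N}" "b \<in> {1..N}" "a \<le> b" for a b
      using p_ordered[of b a] that by (cases "a = b") auto
  qed
  show ?thesis
    unfolding Let_def UT_def[symmetric] a_def[symmetric] rho0_def[symmetric]
    using STau S0 STau2 S02 maj by simp
qed

end
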